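(* Let $(\mathcal{C},\mathcal{B},Q,S)$ be an STV election, counted by the procedure described in the context, and let $w\neq l$ be candidates. If $L_{\mathrm{basic}}(w)>U_{\mathrm{comp}}(l,w)$ (the assertion $\mathsf{AG}(w,l)$), then $l$ cannot be seated when $w$ is not seated.
   Context: An STV election is a tuple $(\mathcal{C},\mathcal{B},Q,S)$ where $\mathcal{C}$ is a finite set of candidates, $\mathcal{B}$ is a multiset of ballots (each ballot is a finite sequence of distinct candidates, in order of preference, most preferred first, not necessarily containing all candidates), $S$ is the number of seats, and $Q=\lfloor |\mathcal{B}|/(S+1)\rfloor+1$ is the quota. For a sequence $\pi$, $\mathrm{first}(\pi)$ is its first element, and for a set $X$ of candidates, $\sigma_X(\pi)$ is the subsequence of $\pi$ consisting of the elements of $X$, in their original order. Counting: every ballot starts with value $1$ and is placed in the pile of its first-ranked candidate; a candidate's tally is the total value of the ballots in its pile. A candidate is eligible if neither eliminated nor seated. In each round every eligible candidate with tally at least $Q$ is seated (gets a quota), and the ballots in its pile get a reduced transfer value (e.g. unweighted Gregory: $(V_c-Q)/|\mathcal{B}_c|$, with $V_c$ the total value and $|\mathcal{B}_c|$ the number of ballots in its pile) and move to the next-ranked eligible candidate on each ballot (or are exhausted). If no candidate reaches a quota, the eligible candidate with smallest tally is eliminated and its ballots move at their current value to their next-ranked eligible candidate (or are exhausted). Counting stops when all $S$ seats are filled or the number of eligible candidates equals the number of unfilled seats, in which case all remaining eligible candidates are seated. "Seated" covers both ways of obtaining a seat. Definitions: $L_{\mathrm{basic}}(c)=|\{\beta\in\mathcal{B}:\mathrm{first}(\beta)=c\}|$;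 $U_{\mathrm{comp}}(c,c')=|\{\beta\in\mathcal{B}:\mathrm{first}(\sigma_{\{c,c'\}}(\beta))=c\}|$, counted with multiplicity. *)

theory Defs
  imports Complex_Main
begin

text \<open>An STV election: candidates C (finite set), ballots bs (a list, i.e. a multiset
  with multiplicity, indexed by position), S seats.  A counting state is a triple
  (E, X, v): seated candidates E, eliminated candidates X, and the current value v i
  of ballot number i.\<close>

type_synonym 'c stv_state = "'c set \<times> 'c set \<times> (nat \<Rightarrow> real)"

definition quota :: "'c list list \<Rightarrow> nat \<Rightarrow> nat" where
  "quota bs S = length bs div (S + 1) + 1"

definition eligible :: "'c set \<Rightarrow> 'c set \<Rightarrow> 'c set \<Rightarrow> 'c set" where
  "eligible C E X = C - (E \<union> X)"

text \<open>The candidate in whose pile a ballot lies: its highest-ranked eligible candidate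
  (None = exhausted).\<close>
definition holder :: "'c set \<Rightarrow> 'c list \<Rightarrow> 'c option" where
  "holder El b = find (\<lambda>c. c \<in> El) b"

definition pile :: "'c set \<Rightarrow> 'c list list \<Rightarrow> 'c set \<Rightarrow> 'c set \<Rightarrow> 'c \<Rightarrow> nat set" where
  "pile C bs E X c = {i. i < length bs \<and> holder (eligible C E X) (bs ! i) = Some c}"

definition tally :: "'c set \<Rightarrow> 'c list list \<Rightarrow> 'c stv_state \<Rightarrow> 'c \<Rightarrow> real" where
  "tally C bs st c = (case st of (E, X, v) \<Rightarrow> (\<Sum>i\<in>pile C bs E X c. v i))"

definition reaching_quota :: "'c set \<Rightarrow> 'c list list \<Rightarrow> nat \<Rightarrow> 'c stv_state \<Rightarrow> 'c set" where
  "reaching_quota C bs S st = (case st of (E, X, v) \<Rightarrow>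
     {c \<in> eligible C E X. tally C bs st c \<ge> real (quota bs S)})"

text \<open>Unweighted Gregory transfer values for the ballots of the candidates in W.\<close>
definition gregory :: "'c set \<Rightarrow> 'c list list \<Rightarrow> nat \<Rightarrow> 'c stv_state \<Rightarrow> 'c set \<Rightarrow> nat \<Rightarrow> real" where
  "gregory C bs S st W = (case st of (E, X, v) \<Rightarrow> (\<lambda>i.
     (case holder (eligible C E X) (bs ! i) of
        Some c \<Rightarrow> if c \<in> W then (tally C bs st c - real (quota bs S)) / real (card (pile C bs E X c))
                  else v i
      | None \<Rightarrow> v i)))"

text \<open>stv_outcome C bs S st R: counting from state st can terminate with the set R of
  seated candidates (nondeterministic in the tie-breaking of eliminations).\<close>
inductive stv_outcome :: "'c set \<Rightarrow> 'c list list \<Rightarrow> nat \<Rightarrow> 'c stv_state \<Rightarrow> 'c set \<Rightarrow> bool"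
  for C bs S where
  filled: "card E \<ge> S \<Longrightarrow> stv_outcome C bs S (E, X, v) E"
| remaining: "card E < S \<Longrightarrow> card (eligible C E X) \<le> S - card E \<Longrightarrow>
     stv_outcome C bs S (E, X, v) (E \<union> eligible C E X)"
| seat: "card E < S \<Longrightarrow> card (eligible C E X) > S - card E \<Longrightarrow>
     reaching_quota C bs S (E, X, v) \<noteq> {} \<Longrightarrow>
     stv_outcome C bs S (E \<union> reaching_quota C bs S (E, X, v), X,
        gregory C bs S (E, X, v) (reaching_quota C bs S (E, X, v))) R \<Longrightarrow>
     stv_outcome C bs S (E, X, v) R"
| elim: "card E < S \<Longrightarrow> card (eligible C E X) > S - card E \<Longrightarrow>
     reaching_quota C bs S (E, X, v) = {} \<Longrightarrow>
     c \<in> eligible C E X \<Longrightarrow>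
     (\<forall>d \<in> eligible C E X. tally C bs (E, X, v) c \<le> tally C bs (E, X, v) d) \<Longrightarrow>
     stv_outcome C bs S (E, X \<union> {c}, v) R \<Longrightarrow>
     stv_outcome C bs S (E, X, v) R"

definition stv_initial :: "'c stv_state" where
  "stv_initial = ({}, {}, (\<lambda>_. 1))"

definition L_basic :: "'c list list \<Rightarrow> 'c \<Rightarrow> nat" where
  "L_basic bs c = length (filter (\<lambda>b. b \<noteq> [] \<and> hd b = c) bs)"

definition sigma :: "'c set \<Rightarrow> 'c list \<Rightarrow> 'c list" where
  "sigma Y b = filter (\<lambda>x. x \<in> Y) b"

definition U_comp :: "'c list list \<Rightarrow> 'c \<Rightarrow> 'c \<Rightarrow> nat" where
  "U_comp bs c c' = length (filter (\<lambda>b. sigma {c, c'} b \<noteq> [] \<and> hd (sigma {c, c'} b) = c) bs)"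

end

theory Submission
  imports Defs
begin

lemma find_l_sigma:
  assumes "find (\<lambda>c. c \<in> El) b = Some l" and "w \<in> El"
  shows "sigma {l, w} b \<noteq> [] \<and> hd (sigma {l, w} b) = l"
  using assms
proof (induction b)
  case Nil then show ?case by simp
next
  case (Cons x b)
  show ?case
  proof (cases "x \<in> El")
    case True
    then have "x = l" using Cons.prems by simp
    then show ?thesis by (simp add: sigma_def)
  next
    case False
    then have f: "find (\<lambda>c. c \<in> El) b = Some l" using Cons.prems by simp
    have "l \<in> El" using f by (metis (mono_tags, lifting) find_Some_iff nth_mem)
    then have "x \<noteq> l" "x \<noteq> w" using False Cons.prems by auto
    then show ?thesis using Cons.IH[OF f Cons.prems(2)] by (simp add: sigma_def)
  qed
qed

lemma pile_finite: "finite (pile C bs E X c)"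
  unfolding pile_def by (rule finite_subset[of _ "{..<length bs}"]) auto

lemma tally_w:
  assumes "w \<in> eligible C E X"
    and "\<forall>i<length bs. bs!i \<noteq> [] \<and> hd (bs!i) = w \<longrightarrow> v i = 1"
    and "\<forall>i. 0 \<le> v i"
  shows "real (L_basic bs w) \<le> tally C bs (E,X,v) w"
proof -
  define A where "A = {i. i < length bs \<and> bs!i \<noteq> [] \<and> hd (bs!i) = w}"
  have L: "L_basic bs w = card A" unfolding L_basic_def A_def by (rule length_filter_conv_card)
  have sub: "A \<subseteq> pile C bs E X w"
  proof
    fix i assume "i \<in> A"
    then have "i < length bs" "bs!i = w # tl (bs!i)" unfolding A_def by auto
    then show "i \<in> pile C bs E X w" unfolding pile_def holder_def using assms(1)
      by (metis (mono_tags, lifting) find.simps(2) mem_Collect_eq)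
  qed
  have "(\<Sum>i\<in>A. v i) = card A" using assms(2) unfolding A_def by simp
  moreover have "(\<Sum>i\<in>A. v i) \<le> (\<Sum>i\<in>pile C bs E X w. v i)"
    by (rule sum_mono2[OF pile_finite sub]) (use assms(3) in auto)
  ultimately show ?thesis using L unfolding tally_def by simp
qed

lemma tally_l:
  assumes "w \<in> eligible C E X" and "\<forall>i. v i \<le> 1"
  shows "tally C bs (E,X,v) l \<le> real (U_comp bs l w)"
proof -
  define B where "B = {i. i < length bs \<and> sigma {l, w} (bs!i) \<noteq> [] \<and> hd (sigma {l, w} (bs!i)) = l}"
  have U: "U_comp bs l w = card B" unfolding U_comp_def B_def by (rule length_filter_conv_card)
  have sub: "pile C bs E X l \<subseteq> B"
    unfolding pile_def B_def holder_def using find_l_sigma[OF _ assms(1)] by auto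
  have fB: "finite B" unfolding B_def by (rule finite_subset[of _ "{..<length bs}"]) auto
  have "(\<Sum>i\<in>pile C bs E X l. v i) \<le> of_nat (card (pile C bs E X l)) * 1"
    by (rule sum_bounded_above) (use assms(2) in auto)
  also have "\<dots> \<le> card B" using card_mono[OF fB sub] by simp
  finally show ?thesis using U unfolding tally_def by simp
qed

lemma tally_le_card:
  assumes "\<forall>i. v i \<le> 1"
  shows "tally C bs (E,X,v) c \<le> real (card (pile C bs E X c))"
proof -
  have "(\<Sum>i\<in>pile C bs E X c. v i) \<le> of_nat (card (pile C bs E X c)) * 1"
    by (rule sum_bounded_above) (use assms in auto)
  then show ?thesis unfolding tally_def by simp
qed

definition inv where
  "inv C bs w l st = (case st of (E, X, v) \<Rightarrow>
     E \<inter> X = {} \<and> (\<forall>i. 0 \<le> v i \<and> v i \<le> 1) \<and>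
     (w \<in> eligible C E X \<longrightarrow> (\<forall>i<length bs. bs!i \<noteq> [] \<and> hd (bs!i) = w \<longrightarrow> v i = 1)) \<and>
     (l \<in> E \<longrightarrow> w \<in> E) \<and> (w \<in> X \<longrightarrow> l \<in> X))"

lemma main:
  assumes "stv_outcome C bs S st R"
    and "w \<in> C" and "l \<in> C" and "w \<noteq> l"
    and AG: "L_basic bs w > U_comp bs l w"
    and "inv C bs w l st" and "l \<in> R"
  shows "w \<in> R"
  using assms
proof (induction rule: stv_outcome.induct)
  case (filled E X v)
  then show ?case unfolding inv_def by auto
next
  case (remaining E X v)
  then show ?case unfolding inv_def eligible_def by auto
next
  case (seat E X v R)
  let ?RQ = "reaching_quota C bs S (E, X, v)"
  let ?v' = "gregory C bs S (E, X, v) ?RQ"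
  have I: "E \<inter> X = {}" "\<forall>i. 0 \<le> v i \<and> v i \<le> 1"
    "w \<in> eligible C E X \<longrightarrow> (\<forall>i<length bs. bs!i \<noteq> [] \<and> hd (bs!i) = w \<longrightarrow> v i = 1)"
    "l \<in> E \<longrightarrow> w \<in> E" "w \<in> X \<longrightarrow> l \<in> X"
    using seat.prems(5) unfolding inv_def by auto
  have RQsub: "?RQ \<subseteq> eligible C E X" unfolding reaching_quota_def by auto
  have Q: "real (quota bs S) \<ge> 1" unfolding quota_def by simp
  have vals: "0 \<le> ?v' i \<and> ?v' i \<le> 1" for i
  proof (cases "holder (eligible C E X) (bs ! i)")
    case None then show ?thesis using I(2) unfolding gregory_def by simp
  next
    case (Some c)
    show ?thesis
    proof (cases "c \<in> ?RQ")
      case False then show ?thesis using I(2) Some unfolding gregory_def by simp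
    next
      case True
      have t: "tally C bs (E,X,v) c \<ge> real (quota bs S)"
        using True unfolding reaching_quota_def by simp
      have tc: "tally C bs (E,X,v) c \<le> real (card (pile C bs E X c))"
        using tally_le_card[of v] I(2) by auto
      have "?v' i = (tally C bs (E,X,v) c - real (quota bs S)) / real (card (pile C bs E X c))"
        using True Some unfolding gregory_def by simp
      moreover have "0 \<le> (tally C bs (E,X,v) c - real (quota bs S)) / real (card (pile C bs E X c))"
        using t by simp
      moreover have "(tally C bs (E,X,v) c - real (quota bs S)) / real (card (pile C bs E X c)) \<le> 1"
      proof (cases "card (pile C bs E X c) = 0")
        case True then show ?thesis by simp
      next
        case False then show ?thesis using tc Q by (simp add: divide_le_eq)
      qed
      ultimately show ?thesis by simp
    qed
  qed
  have inv': "inv C bs w l (E \<union> ?RQ, X, ?v')"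
    unfolding inv_def
  proof (simp only: prod.case, intro conjI)
    show "(E \<union> ?RQ) \<inter> X = {}" using I(1) RQsub unfolding eligible_def by auto
    show "\<forall>i. 0 \<le> ?v' i \<and> ?v' i \<le> 1" using vals by blast
    show "w \<in> X \<longrightarrow> l \<in> X" using I(5) .
    show "w \<in> eligible C (E \<union> ?RQ) X \<longrightarrow> (\<forall>i<length bs. bs!i \<noteq> [] \<and> hd (bs!i) = w \<longrightarrow> ?v' i = 1)"
    proof (intro impI allI)
      fix i assume we: "w \<in> eligible C (E \<union> ?RQ) X" and i: "i < length bs"
        and b: "bs!i \<noteq> [] \<and> hd (bs!i) = w"
      have we0: "w \<in> eligible C E X" "w \<notin> ?RQ" using we unfolding eligible_def by auto
      have "bs!i = w # tl (bs!i)" using b by (cases "bs!i") auto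
      then have "holder (eligible C E X) (bs!i) = Some w" unfolding holder_def using we0(1)
        by (metis find.simps(2))
      then have "?v' i = v i" using we0(2) unfolding gregory_def by simp
      then show "?v' i = 1" using I(3) we0(1) i b by simp
    qed
    show "l \<in> E \<union> ?RQ \<longrightarrow> w \<in> E \<union> ?RQ"
    proof
      assume "l \<in> E \<union> ?RQ"
      show "w \<in> E \<union> ?RQ"
      proof (cases "l \<in> E")
        case True then show ?thesis using I(4) by simp
      next
        case False
        then have lRQ: "l \<in> ?RQ" using \<open>l \<in> E \<union> ?RQ\<close> by simp
        then have le: "l \<in> eligible C E X" using RQsub by auto
        show ?thesis
        proof (cases "w \<in> E")
          case True then show ?thesis by simp
        next
          case False
          have "w \<notin> X" using I(5) le unfolding eligible_def by auto
          then have we: "w \<in> eligible C E X" using False seat.prems(1) unfolding eligible_def by auto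
          have "real (L_basic bs w) \<le> tally C bs (E,X,v) w"
            using tally_w[OF we] I(2,3) we by auto
          moreover have "tally C bs (E,X,v) l \<le> real (U_comp bs l w)"
            using tally_l[OF we] I(2) by auto
          moreover have "tally C bs (E,X,v) l \<ge> real (quota bs S)"
            using lRQ unfolding reaching_quota_def by simp
          ultimately have "tally C bs (E,X,v) w \<ge> real (quota bs S)"
            using seat.prems(4) by linarith
          then have "w \<in> ?RQ" using we unfolding reaching_quota_def by simp
          then show ?thesis by simp
        qed
      qed
    qed
  qed
  show ?case using seat.IH[OF seat.prems(1-4) inv' seat.prems(6)] .
next
  case (elim E X v c R)
  have I: "E \<inter> X = {}" "\<forall>i. 0 \<le> v i \<and> v i \<le> 1"
    "w \<in> eligible C E X \<longrightarrow> (\<forall>i<length bs. bs!i \<noteq> [] \<and> hd (bs!i) = w \<longrightarrow> v i = 1)"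
    "l \<in> E \<longrightarrow> w \<in> E" "w \<in> X \<longrightarrow> l \<in> X"
    using elim.prems(5) unfolding inv_def by auto
  have inv': "inv C bs w l (E, X \<union> {c}, v)"
    unfolding inv_def
  proof (simp only: prod.case, intro conjI)
    show "E \<inter> (X \<union> {c}) = {}" using I(1) elim.hyps(4) unfolding eligible_def by auto
    show "\<forall>i. 0 \<le> v i \<and> v i \<le> 1" using I(2) .
    show "l \<in> E \<longrightarrow> w \<in> E" using I(4) .
    show "w \<in> eligible C E (X \<union> {c}) \<longrightarrow> (\<forall>i<length bs. bs!i \<noteq> [] \<and> hd (bs!i) = w \<longrightarrow> v i = 1)"
      using I(3) unfolding eligible_def by auto
    show "w \<in> X \<union> {c} \<longrightarrow> l \<in> X \<union> {c}"
    proof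
      assume "w \<in> X \<union> {c}"
      show "l \<in> X \<union> {c}"
      proof (cases "w \<in> X")
        case True then show ?thesis using I(5) by simp
      next
        case False
        then have wc: "w = c" using \<open>w \<in> X \<union> {c}\<close> by simp
        then have we: "w \<in> eligible C E X" using elim.hyps(4) by simp
        show ?thesis
        proof (rule ccontr)
          assume "l \<notin> X \<union> {c}"
          moreover have "l \<notin> E" using I(4) we unfolding eligible_def by auto
          ultimately have le: "l \<in> eligible C E X" using elim.prems(2) unfolding eligible_def by auto
          have "real (L_basic bs w) \<le> tally C bs (E,X,v) w"
            using tally_w[OF we] I(2,3) we by auto
          moreover have "tally C bs (E,X,v) l \<le> real (U_comp bs l w)"
            using tally_l[OF we] I(2) by auto
          moreover have "tally C bs (E,X,v) w \<le> tally C bs (E,X,v) l"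
            using elim.hyps(5) le wc by auto
          ultimately show False using elim.prems(4) by linarith
        qed
      qed
    qed
  qed
  show ?case using elim.IH[OF elim.prems(1-4) inv' elim.prems(6)] .
qed

theorem corollary1:
  fixes C :: "'c set" and bs :: "'c list list" and S :: nat and w l :: 'c
  assumes "finite C"
    and "\<forall>b \<in> set bs. distinct b \<and> set b \<subseteq> C"
    and "w \<in> C" and "l \<in> C" and "w \<noteq> l"
    and "L_basic bs w > U_comp bs l w"
    and "stv_outcome C bs S stv_initial R"
    and "l \<in> R"
  shows "w \<in> R"
proof -
  have "inv C bs w l stv_initial" unfolding inv_def stv_initial_def by simp
  then show ?thesis using main[OF assms(7) assms(3,4,5,6)] assms(8) by blast
qed

end
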